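(* Let $A_2\in\mathbf{C}^{n\times n}$, let $C_2\in\mathbf{C}^{p\times n}$ be any matrix such that the discrete-time antilinear system $x(t+1)=A_2^{\#}x(t)^{\#}$, $y(t)=C_2^{\#}x(t)^{\#}$ is observable, and let $C_N\in\mathbf{C}^{q\times n}$ be such that the pair $(A_2^{\#}A_2,C_N)$ is observable. Then the following are equivalent: (1) the antilinear system $x(t+1)=A_2^{\#}x(t)^{\#}$, $t\in\mathbf{Z}^+$, is asymptotically stable; (2) there exists a unique positive definite matrix $P_1\in\mathbf{C}^{n\times n}$ such that $A_2^{\mathrm H}P_1^{\#}A_2-P_1=-C_2^{\mathrm H}C_2$; (3) there exists a unique positive definite matrix $P_N\in\mathbf{C}^{n\times n}$ such that $(A_2^{\#}A_2)^{\mathrm H}P_N(A_2^{\#}A_2)-P_N=-C_N^{\mathrm H}C_N$. Moreover, if the system is asymptotically stable, then $(C_2,P_1)$ satisfies $A_2^{\mathrm H}P_1^{\#}A_2-P_1=-C_2^{\mathrm H}C_2$ if and only if $(C_N,P_N)=\left(\begin{bmatrix}C_2\\ C_2^{\#}A_2\end{bmatrix},P_1\right)$ satisfies $(A_2^{\#}A_2)^{\mathrm H}P_N(A_2^{\#}A_2)-P_N=-C_N^{\mathrm H}C_N$.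
   Context: $P^{\#}$, $P^{\mathrm H}$: entrywise conjugate, conjugate transpose. A positive definite matrix means a Hermitian positive definite matrix. Observability of the antilinear system means observability of its real representation $\vec x(t+1)=\{0,A_2\}_\circ\vec x(t)$, $\vec y=\{0,C_2\}_\circ\vec x$, where for matrices $A_1,A_2$ of equal size $\{A_1,A_2\}_\circ=\begin{bmatrix}\mathrm{Re}(A_1+A_2) & -\mathrm{Im}(A_1+A_2)\\ \mathrm{Im}(A_1-A_2) & \mathrm{Re}(A_1-A_2)\end{bmatrix}$ and $\vec z=[\mathrm{Re}(z)^{\mathrm T},\mathrm{Im}(z)^{\mathrm T}]^{\mathrm T}$. Asymptotic stability is in the Lyapunov sense (stable and all solutions tend to $0$). *)

theory Defs
  imports "HOL-Analysis.Analysis"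
begin

definition mconj :: "complex^'n^'m \<Rightarrow> complex^'n^'m" where
  "mconj A = (\<chi> i j. cnj (A $ i $ j))"

definition vconj :: "complex^'n \<Rightarrow> complex^'n" where
  "vconj x = (\<chi> i. cnj (x $ i))"

definition mH :: "complex^'n^'m \<Rightarrow> complex^'m^'n" where
  "mH A = transpose (mconj A)"

definition posdef :: "complex^'n^'n \<Rightarrow> bool" where
  "posdef P \<longleftrightarrow> mH P = P \<and>
     (\<forall>x. x \<noteq> 0 \<longrightarrow> 0 < Re (\<Sum>i\<in>UNIV. cnj (x $ i) * (P *v x) $ i))"

definition circ_rep :: "complex^'n^'m \<Rightarrow> complex^'n^'m \<Rightarrow> real^('n + 'n)^('m + 'm)" where
  "circ_rep A1 A2 = (\<chi> i j. (case i of
       Inl a \<Rightarrow> (case j of Inl b \<Rightarrow> Re ((A1 + A2) $ a $ b) | Inr b \<Rightarrow> - Im ((A1 + A2) $ a $ b))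
     | Inr a \<Rightarrow> (case j of Inl b \<Rightarrow> Im ((A1 - A2) $ a $ b) | Inr b \<Rightarrow> Re ((A1 - A2) $ a $ b))))"

definition observable :: "'a::semiring_1^'k^'k \<Rightarrow> 'a^'k^'m \<Rightarrow> bool" where
  "observable F H \<longleftrightarrow> (\<forall>x. (\<forall>t. H *v (((\<lambda>v. F *v v) ^^ t) x) = 0) \<longrightarrow> x = 0)"

definition antilinear_observable :: "complex^'n^'n \<Rightarrow> complex^'n^'p \<Rightarrow> bool" where
  "antilinear_observable A2 C2 \<longleftrightarrow> observable (circ_rep 0 A2) (circ_rep 0 C2)"

definition asymptotically_stable :: "('a::real_normed_vector \<Rightarrow> 'a) \<Rightarrow> bool" where
  "asymptotically_stable f \<longleftrightarrow>
     (\<forall>e>0. \<exists>d>0. \<forall>x0. norm x0 < d \<longrightarrow> (\<forall>t. norm ((f ^^ t) x0) < e)) \<and>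
     (\<forall>x0. (\<lambda>t. (f ^^ t) x0) \<longlonglongrightarrow> 0)"

definition antilin_map :: "complex^'n^'n \<Rightarrow> complex^'n \<Rightarrow> complex^'n" where
  "antilin_map A2 x = mconj A2 *v vconj x"

definition vstack :: "'a^'n^'p \<Rightarrow> 'a^'n^'r \<Rightarrow> 'a^'n^('p + 'r)" where
  "vstack C D = (\<chi> i. case i of Inl k \<Rightarrow> C $ k | Inr k \<Rightarrow> D $ k)"

end

theory Submission
  imports Defs
begin


lemma sum_UNIV_Plus: "(\<Sum>k\<in>(UNIV::('a::finite + 'b::finite) set). f k) = (\<Sum>a\<in>UNIV. f (Inl a)) + (\<Sum>b\<in>UNIV. f (Inr b))"
proof -
  have "(\<Sum>k\<in>(UNIV::('a + 'b) set). f k) = sum f (Inl ` UNIV \<union> Inr ` UNIV)" by (simp add: UNIV_sum[symmetric])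
  also have "\<dots> = sum f (Inl ` UNIV) + sum f (Inr ` UNIV)"
    by (rule sum.union_disjoint) auto
  also have "\<dots> = (\<Sum>a\<in>UNIV. f (Inl a)) + (\<Sum>b\<in>UNIV. f (Inr b))"
    by (simp add: sum.reindex)
  finally show ?thesis .
qed

lemma mconj_mult: "mconj (A ** B) = mconj A ** mconj (B::complex^_^_)"
  by (simp add: mconj_def matrix_matrix_mult_def vec_eq_iff)
lemma mconj_mconj[simp]: "mconj (mconj A) = A"
  by (simp add: mconj_def vec_eq_iff)
lemma mconj_zero[simp]: "mconj 0 = 0"
  by (simp add: mconj_def vec_eq_iff)
lemma mconj_add: "mconj (A + B) = mconj A + mconj B"
  by (simp add: mconj_def vec_eq_iff)
lemma mconj_diff: "mconj (A - B) = mconj A - mconj B"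
  by (simp add: mconj_def vec_eq_iff)
lemma mconj_uminus: "mconj (- A) = - mconj A"
  by (simp add: mconj_def vec_eq_iff)
lemma mH_mult: "mH (A ** B) = mH B ** mH (A::complex^_^_)"
  by (simp add: mH_def mconj_def transpose_def matrix_matrix_mult_def vec_eq_iff mult.commute)
lemma mH_mH[simp]: "mH (mH A) = A"
  by (simp add: mH_def mconj_def transpose_def vec_eq_iff)
lemma mconj_mH: "mconj (mH A) = mH (mconj A)"
  by (simp add: mH_def mconj_def transpose_def vec_eq_iff)
lemma vconj_mult: "vconj (A *v x) = mconj A *v vconj x"
  by (simp add: mconj_def vconj_def matrix_vector_mult_def vec_eq_iff)
lemma vconj_vconj[simp]: "vconj (vconj x) = x"
  by (simp add: vconj_def vec_eq_iff)
lemma matrix_diff_ldistrib: "(A::'a::ring_1^_^_) ** (B - C) = A ** B - A ** C"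
  by (vector matrix_matrix_mult_def sum_subtractf[symmetric] field_simps)
lemma matrix_diff_rdistrib: "((B::'a::ring_1^_^_) - C) ** A = B ** A - C ** A"
  by (vector matrix_matrix_mult_def sum_subtractf[symmetric] field_simps)
lemma matrix_add_rdistrib': "((B::'a::ring_1^_^_) + C) ** A = B ** A + C ** A"
  by (vector matrix_matrix_mult_def sum.distrib[symmetric] field_simps)

definition Tm :: "complex^'n^'n \<Rightarrow> complex^'n^'n \<Rightarrow> complex^'n^'n" where
  "Tm A X = mH A ** mconj X ** A"

lemma Tm_add: "Tm A (X + Y) = Tm A X + Tm A Y"
  by (simp add: Tm_def mconj_add matrix_add_ldistrib matrix_add_rdistrib')
lemma Tm_diff: "Tm A (X - Y) = Tm A X - Tm A Y"
  by (simp add: Tm_def mconj_diff matrix_diff_ldistrib matrix_diff_rdistrib)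
lemma Tm_uminus: "Tm A (- X) = - Tm A X"
  using Tm_diff[of A 0 X] by (simp add: Tm_def)
lemma Tm_Tm: "Tm A (Tm A X) = mH (mconj A ** A) ** X ** (mconj A ** A)"
  by (simp add: Tm_def mconj_mult mH_mult mconj_mH matrix_mul_assoc)
lemma Tm_CC: "Tm A (mH C ** C) = mH (mconj C ** A) ** (mconj C ** A)"
  by (simp add: Tm_def mconj_mult mH_mult mconj_mH matrix_mul_assoc)

lemma vstack_gram: "mH (vstack C D) ** vstack C D = mH C ** C + mH D ** (D::complex^_^_)"
  by (simp add: mH_def mconj_def transpose_def vstack_def matrix_matrix_mult_def vec_eq_iff sum_UNIV_Plus)
lemma vstack_mult: "vstack C D *v x = 0 \<longleftrightarrow> C *v x = 0 \<and> D *v (x::'a::semiring_1^_)= 0"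
  by (auto simp: vstack_def matrix_vector_mult_def vec_eq_iff split: sum.splits)


primrec mpow :: "'a::semiring_1^'n^'n \<Rightarrow> nat \<Rightarrow> 'a^'n^'n" where
  "mpow M 0 = mat 1"
| "mpow M (Suc t) = M ** mpow M t"

lemma mpow_add: "mpow M (a + b) = mpow M a ** mpow M b"
  by (induction a) (simp_all add: matrix_mul_assoc)

lemma mpow_Suc_right: "mpow M (Suc t) = mpow M t ** M"
  using mpow_add[of M t 1] by simp

lemma funpow_mv: "((\<lambda>v. M *v v) ^^ t) x = mpow M t *v x"
  by (induction t) (simp_all add: matrix_vector_mul_assoc)

definition l1 :: "complex^'n^'m \<Rightarrow> real" where
  "l1 A = (\<Sum>i\<in>UNIV. \<Sum>j\<in>UNIV. cmod (A$i$j))"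

lemma l1_nonneg: "0 \<le> l1 A"
  by (simp add: l1_def sum_nonneg)

lemma entry_le_l1: "cmod (A$i$j) \<le> l1 A"
proof -
  have "cmod (A$i$j) \<le> (\<Sum>j\<in>UNIV. cmod (A$i$j))"
    by (rule member_le_sum) auto
  also have "\<dots> \<le> l1 A" unfolding l1_def
    by (rule member_le_sum[where f="\<lambda>i. \<Sum>j\<in>UNIV. cmod (A$i$j)"]) (auto intro: sum_nonneg)
  finally show ?thesis .
qed

lemma row_le_l1: "(\<Sum>j\<in>UNIV. cmod (B$k$j)) \<le> l1 B"
  unfolding l1_def
  by (rule member_le_sum[where f="\<lambda>i. \<Sum>j\<in>UNIV. cmod (B$i$j)"]) (auto intro: sum_nonneg)

lemma l1_mult: "l1 (A ** B) \<le> l1 A * l1 (B::complex^_^_)"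
proof -
  have "l1 (A ** B) \<le> (\<Sum>i\<in>UNIV. \<Sum>j\<in>UNIV. \<Sum>k\<in>UNIV. cmod (A$i$k) * cmod (B$k$j))"
    unfolding l1_def matrix_matrix_mult_def
    by (auto intro!: sum_mono order.trans[OF norm_sum] simp: norm_mult)
  also have "\<dots> = (\<Sum>i\<in>UNIV. \<Sum>k\<in>UNIV. cmod (A$i$k) * (\<Sum>j\<in>UNIV. cmod (B$k$j)))"
    unfolding sum_distrib_left by (rule sum.cong[OF refl], rule sum.swap)
  also have "\<dots> \<le> (\<Sum>i\<in>UNIV. \<Sum>k\<in>UNIV. cmod (A$i$k) * l1 B)"
    by (intro sum_mono mult_left_mono row_le_l1) auto
  also have "\<dots> = l1 A * l1 B" by (simp add: l1_def sum_distrib_right)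
  finally show ?thesis .
qed

lemma cmod_nth_le: "cmod (x$i) \<le> norm x"
  by (rule Finite_Cartesian_Product.norm_nth_le)

lemma norm_vec_le_sum: "norm (x::complex^'n) \<le> (\<Sum>i\<in>UNIV. cmod (x$i))"
  by (simp add: norm_vec_def L2_set_le_sum)

lemma norm_mv_le: "norm (A *v x) \<le> l1 A * norm (x::complex^_)"
proof -
  have "norm (A *v x) \<le> (\<Sum>i\<in>UNIV. cmod ((A *v x)$i))" by (rule norm_vec_le_sum)
  also have "\<dots> \<le> (\<Sum>i\<in>UNIV. \<Sum>j\<in>UNIV. cmod (A$i$j) * norm x)"
    unfolding matrix_vector_mult_def
    by (auto intro!: sum_mono order.trans[OF norm_sum] mult_left_mono cmod_nth_le simp: norm_mult)
  also have "\<dots> = l1 A * norm x" by (simp add: l1_def sum_distrib_right)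
  finally show ?thesis .
qed

lemma l1_mH: "l1 (mH A) = l1 A"
  unfolding l1_def mH_def mconj_def transpose_def by simp (rule sum.swap)

definition stab :: "complex^'n^'n \<Rightarrow> bool" where
  "stab M \<longleftrightarrow> (\<forall>x. (\<lambda>t. mpow M t *v x) \<longlonglongrightarrow> 0)"

lemma mpow_entry: "mpow M t $ i $ j = (mpow M t *v axis j 1) $ i"
  by (simp add: matrix_vector_mult_def axis_def if_distrib cong: if_cong)

lemma stab_l1: assumes "stab M" shows "(\<lambda>t. l1 (mpow M t)) \<longlonglongrightarrow> 0"
proof -
  have "(\<lambda>t. cmod (mpow M t $ i $ j)) \<longlonglongrightarrow> 0" for i j
  proof -
    have "(\<lambda>t. (mpow M t *v axis j 1) $ i) \<longlonglongrightarrow> 0 $ i"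
      using assms unfolding stab_def by (intro tendsto_vec_nth) auto
    then show ?thesis unfolding mpow_entry by (simp add: tendsto_norm_zero)
  qed
  then have "(\<lambda>t. \<Sum>i\<in>UNIV. \<Sum>j\<in>UNIV. cmod (mpow M t $ i $ j)) \<longlonglongrightarrow> (\<Sum>i\<in>(UNIV::'a set). \<Sum>j\<in>(UNIV::'a set). 0)"
    by (intro tendsto_sum) auto
  then show ?thesis by (simp add: l1_def)
qed

lemma stab_geom: assumes "stab M"
  shows "\<exists>K r. 0 \<le> K \<and> 0 < r \<and> r < 1 \<and> (\<forall>t. l1 (mpow M t) \<le> K * r ^ t)"
proof -
  obtain N where N: "\<forall>n\<ge>N. norm (l1 (mpow M n) - 0) < 1/2"
    using LIMSEQ_D[OF stab_l1[OF assms], of "1/2"] by auto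
  define k where "k = Suc N"
  have k: "l1 (mpow M k) < 1/2" using N[rule_format, of k] l1_nonneg[of "mpow M k"] by (simp add: k_def)
  have "k \<noteq> 0" by (simp add: k_def)
  define r :: real where "r = root k (1/2)"
  have r0: "0 < r" and r1: "r < 1" using \<open>k \<noteq> 0\<close> by (auto simp: r_def)
  have rk: "r ^ k = 1/2" using \<open>k \<noteq> 0\<close> by (simp add: r_def)
  define B where "B = (\<Sum>s\<le>k. l1 (mpow M s))"
  have B: "l1 (mpow M s) \<le> B" if "s \<le> k" for s
    unfolding B_def using that by (intro member_le_sum) (auto intro: l1_nonneg)
  have B0: "0 \<le> B" unfolding B_def by (intro sum_nonneg l1_nonneg)
  have rk0: "0 < r ^ k" using r0 by simp
  have main: "l1 (mpow M t) \<le> (B / r ^ k) * r ^ t" for t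
  proof (induction t rule: less_induct)
    case (less t)
    show ?case
    proof (cases "t < k")
      case True
      have "r ^ k \<le> r ^ t" using True r0 r1 by (intro power_decreasing) auto
      have "l1 (mpow M t) \<le> B" using B[of t] True by simp
      also have "B = (B / r ^ k) * r ^ k" using r0 by simp
      also have "\<dots> \<le> (B / r ^ k) * r ^ t"
        using \<open>r ^ k \<le> r ^ t\<close> B0 rk0 by (intro mult_left_mono) auto
      finally show ?thesis .
    next
      case False
      then obtain d where t: "t = k + d" using le_Suc_ex not_less by blast
      have dt: "d < t" using t \<open>k \<noteq> 0\<close> by simp
      have "l1 (mpow M t) \<le> l1 (mpow M k) * l1 (mpow M d)"
        unfolding t mpow_add by (rule l1_mult)
      also have "\<dots> \<le> (1/2) * ((B / r ^ k) * r ^ d)"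
        using less.IH[OF dt] k by (intro mult_mono) (auto intro: l1_nonneg)
      also have "\<dots> = (B / r ^ k) * (r ^ k * r ^ d)" unfolding rk by simp
      also have "r ^ k * r ^ d = r ^ t" unfolding t power_add by simp
      finally show ?thesis .
    qed
  qed
  have K0: "0 \<le> B / r ^ k" using B0 r0 by simp
  show ?thesis
    apply (rule exI[of _ "B / r ^ k"])
    apply (rule exI[of _ r])
    by (intro conjI allI main K0 r0 r1)
qed


definition hp :: "complex^'n \<Rightarrow> complex^'n \<Rightarrow> complex" where
  "hp u v = (\<Sum>i\<in>UNIV. cnj (u$i) * v$i)"

lemma hp_adj: "hp u (B *v v) = hp (mH B *v u) v"
proof -
  have "hp u (B *v v) = (\<Sum>i\<in>UNIV. \<Sum>j\<in>UNIV. cnj (u$i) * (B$i$j * v$j))"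
    by (simp add: hp_def matrix_vector_mult_def sum_distrib_left)
  also have "\<dots> = (\<Sum>j\<in>UNIV. \<Sum>i\<in>UNIV. cnj (u$i) * (B$i$j * v$j))"
    by (rule sum.swap)
  also have "\<dots> = hp (mH B *v u) v"
    by (simp add: hp_def matrix_vector_mult_def mH_def mconj_def transpose_def sum_distrib_left sum_distrib_right mult_ac)
  finally show ?thesis .
qed

definition qf :: "complex^'n^'n \<Rightarrow> complex^'n \<Rightarrow> complex" where
  "qf P x = hp x (P *v x)"

lemma qf_conj: "qf (mH B ** P ** B) x = qf P (B *v x)"
  unfolding qf_def
  by (simp add: matrix_vector_mul_assoc[symmetric] hp_adj)

lemma hp_self: "hp u u = of_real (norm u ^ 2)"
proof -
  have "norm u ^ 2 = (\<Sum>i\<in>UNIV. cmod (u$i) ^ 2)"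
    by (simp add: norm_vec_def L2_set_def sum_nonneg)
  then have "of_real (norm u ^ 2) = (\<Sum>i\<in>UNIV. of_real (cmod (u$i) ^ 2) :: complex)" by simp
  also have "\<dots> = hp u u" unfolding hp_def
    by (rule sum.cong[OF refl], subst complex_norm_square, rule mult.commute)
  finally show ?thesis by simp
qed

lemma qf_gram: "qf (mH H ** H) y = of_real (norm (H *v y) ^ 2)"
proof -
  have "hp y (mH H *v (H *v y)) = hp (mH (mH H) *v y) (H *v y)" by (rule hp_adj)
  then show ?thesis unfolding qf_def by (simp add: matrix_vector_mul_assoc[symmetric] hp_self)
qed

lemma qf_diff: "qf (P - Q) x = qf P x - qf Q x"
  by (simp add: qf_def hp_def matrix_vector_mult_diff_rdistrib sum_subtractf[symmetric] algebra_simps)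

lemma qf_uminus: "qf (- Q) x = - qf Q x"
  using qf_diff[of 0 Q x] by (simp add: qf_def hp_def)

lemma qf_expand: "qf P x = (\<Sum>i\<in>UNIV. cnj (x$i) * (\<Sum>j\<in>UNIV. P$i$j * x$j))"
  by (simp add: qf_def hp_def matrix_vector_mult_def)

lemma vsc: "(a *\<^sub>R x) $ i = complex_of_real a * x $ i"
  unfolding vector_scaleR_component by (rule scaleR_conv_of_real)

lemma qf_scale: "qf P (a *\<^sub>R x) = of_real (a^2) * qf P x"
  unfolding qf_expand vsc by (simp add: sum_distrib_left power2_eq_square mult_ac scaleR_conv_of_real)

lemma mH_mat1[simp]: "mH (mat 1 :: complex^'n^'n) = mat 1"
  by (simp add: mH_def mconj_def transpose_def mat_def vec_eq_iff)

definition G :: "complex^'n^'n \<Rightarrow> complex^'n^'n \<Rightarrow> nat \<Rightarrow> complex^'n^'n" where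
  "G M Q t = mH (mpow M t) ** Q ** mpow M t"

definition lyap :: "complex^'n^'n \<Rightarrow> complex^'n^'n \<Rightarrow> complex^'n^'n" where
  "lyap M Q = (\<chi> i j. suminf (\<lambda>t. G M Q t $ i $ j))"

lemma G_0: "G M Q 0 = Q" by (simp add: G_def)

lemma G_Suc: "mH M ** G M Q t ** M = G M Q (Suc t)"
  by (simp add: G_def mpow_Suc_right mH_mult matrix_mul_assoc del: mpow.simps)

lemma G_summable: assumes "stab M" shows "summable (\<lambda>t. G M Q t $ i $ j)"
proof -
  obtain K r where K: "0 \<le> K" "0 < r" "r < 1" "\<And>t. l1 (mpow M t) \<le> K * r ^ t"
    using stab_geom[OF assms] by blast
  have bd: "norm (G M Q t $ i $ j) \<le> (K * K * l1 Q) * (r * r) ^ t" for t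
  proof -
    have "norm (G M Q t $ i $ j) \<le> l1 (G M Q t)" by (rule entry_le_l1)
    also have "\<dots> \<le> l1 (mH (mpow M t) ** Q) * l1 (mpow M t)" unfolding G_def by (rule l1_mult)
    also have "\<dots> \<le> (l1 (mpow M t) * l1 Q) * l1 (mpow M t)"
      by (intro mult_right_mono l1_nonneg order.trans[OF l1_mult]) (simp add: l1_mH)
    also have "\<dots> \<le> ((K * r ^ t) * l1 Q) * (K * r ^ t)"
      by (intro mult_mono K(4) l1_nonneg mult_nonneg_nonneg) (use K in auto)
    also have "\<dots> = (K * K * l1 Q) * (r * r) ^ t" by (simp add: power_mult_distrib mult_ac)
    finally show ?thesis .
  qed
  have "r * r < 1 * 1" by (rule mult_strict_mono) (use K in auto)
  then have sg: "summable (\<lambda>t. (K * K * l1 Q) * (r * r) ^ t)"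
    using K by (intro summable_mult summable_geometric) (simp add: abs_mult)
  show ?thesis by (rule summable_comparison_test'[OF sg bd])
qed

lemma G_sums: "stab M \<Longrightarrow> (\<lambda>t. G M Q t $ i $ j) sums (lyap M Q $ i $ j)"
  unfolding lyap_def by (simp add: summable_sums G_summable)

lemma lyap_eq: assumes "stab M" shows "mH M ** lyap M Q ** M - lyap M Q = - Q"
proof -
  have "(mH M ** lyap M Q ** M) $ i $ j = lyap M Q $ i $ j - Q $ i $ j" for i j
  proof -
    have e: "(mH M ** X ** M) $ i $ j = (\<Sum>k\<in>UNIV. (\<Sum>l\<in>UNIV. mH M $ i $ l * X $ l $ k) * M $ k $ j)" for X
      by (simp add: matrix_matrix_mult_def)
    have "(\<lambda>t. (\<Sum>k\<in>UNIV. (\<Sum>l\<in>UNIV. mH M $ i $ l * G M Q t $ l $ k) * M $ k $ j))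
            sums (\<Sum>k\<in>UNIV. (\<Sum>l\<in>UNIV. mH M $ i $ l * lyap M Q $ l $ k) * M $ k $ j)"
      by (intro sums_sum sums_mult sums_mult2 G_sums assms)
    then have "(\<lambda>t. G M Q (Suc t) $ i $ j) sums ((mH M ** lyap M Q ** M) $ i $ j)"
      unfolding e[symmetric] G_Suc .
    moreover have "(\<lambda>t. G M Q (Suc t) $ i $ j) sums (lyap M Q $ i $ j - Q $ i $ j)"
      using G_sums[OF assms, of Q i j] by (subst sums_Suc_iff) (simp add: G_0)
    ultimately show ?thesis by (rule sums_unique2)
  qed
  then show ?thesis by (simp add: vec_eq_iff)
qed

lemma G_herm: "mH Q = Q \<Longrightarrow> mH (G M Q t) = G M Q t"
  by (simp add: G_def mH_mult matrix_mul_assoc)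

lemma lyap_herm: assumes "stab M" "mH Q = Q" shows "mH (lyap M Q) = lyap M Q"
proof -
  have "(mH (lyap M Q)) $ i $ j = lyap M Q $ i $ j" for i j
  proof -
    have "(\<lambda>t. cnj (G M Q t $ j $ i)) sums cnj (lyap M Q $ j $ i)"
      using G_sums[OF assms(1)] by (simp add: sums_cnj)
    moreover have "cnj (G M Q t $ j $ i) = G M Q t $ i $ j" for t
      using arg_cong[OF G_herm[OF assms(2), of M t], of "\<lambda>X. X $ i $ j"]
      by (simp add: mH_def mconj_def transpose_def)
    ultimately have "(\<lambda>t. G M Q t $ i $ j) sums cnj (lyap M Q $ j $ i)" by simp
    then have "cnj (lyap M Q $ j $ i) = lyap M Q $ i $ j" using G_sums[OF assms(1)] by (rule sums_unique2)
    then show ?thesis by (simp add: mH_def mconj_def transpose_def)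
  qed
  then show ?thesis by (simp add: vec_eq_iff)
qed

lemma lyap_qf: assumes "stab M" shows "(\<lambda>t. qf (G M Q t) x) sums qf (lyap M Q) x"
  unfolding qf_expand by (intro sums_sum sums_mult sums_mult2 G_sums assms)

lemma lyap_posdef: assumes "stab M" "observable M H" shows "posdef (lyap M (mH H ** H))"
  unfolding posdef_def
proof (intro conjI allI impI)
  show "mH (lyap M (mH H ** H)) = lyap M (mH H ** H)"
    by (rule lyap_herm[OF assms(1)]) (simp add: mH_mult)
  fix x :: "complex^'a" assume "x \<noteq> 0"
  have gq: "qf (G M (mH H ** H) t) x = of_real (norm (H *v (mpow M t *v x)) ^ 2)" for t
    unfolding G_def by (simp add: qf_conj qf_gram matrix_vector_mul_assoc)
  have "(\<lambda>t. Re (qf (G M (mH H ** H) t) x)) sums Re (qf (lyap M (mH H ** H)) x)"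
    using lyap_qf[OF assms(1)] by (simp add: sums_complex_iff)
  then have s: "(\<lambda>t. norm (H *v (mpow M t *v x)) ^ 2) sums Re (qf (lyap M (mH H ** H)) x)"
    by (simp add: gq)
  obtain t where "H *v (mpow M t *v x) \<noteq> 0"
    using assms(2) \<open>x \<noteq> 0\<close> unfolding observable_def funpow_mv by blast
  then have "0 < suminf (\<lambda>t. norm (H *v (mpow M t *v x)) ^ 2)"
    by (intro suminf_pos2[OF sums_summable[OF s]]) auto
  then have "0 < Re (qf (lyap M (mH H ** H)) x)" using s by (simp add: sums_iff)
  then show "0 < Re (\<Sum>i\<in>UNIV. cnj (x $ i) * (lyap M (mH H ** H) *v x) $ i)"
    by (simp add: qf_def hp_def)
qed

lemma fix0: assumes "stab M" "mH M ** D ** M = D" shows "D = 0"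
proof -
  have it: "mH (mpow M t) ** D ** mpow M t = D" for t
  proof (induction t)
    case 0 then show ?case by simp
  next
    case (Suc t)
    have "mH (mpow M (Suc t)) ** D ** mpow M (Suc t) = mH (mpow M t) ** (mH M ** D ** M) ** mpow M t"
      by (simp add: mH_mult matrix_mul_assoc)
    then show ?case using Suc assms(2) by simp
  qed
  have "D $ i $ j = 0" for i j
  proof -
    have b: "cmod (D $ i $ j) \<le> l1 D * l1 (mpow M t) ^ 2" for t
    proof -
      have "cmod (D $ i $ j) \<le> l1 D" by (rule entry_le_l1)
      also have "\<dots> = l1 (mH (mpow M t) ** D ** mpow M t)" using it by simp
      also have "\<dots> \<le> l1 (mH (mpow M t) ** D) * l1 (mpow M t)" by (rule l1_mult)
      also have "\<dots> \<le> (l1 (mpow M t) * l1 D) * l1 (mpow M t)"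
        by (intro mult_right_mono l1_nonneg order.trans[OF l1_mult]) (simp add: l1_mH)
      finally show ?thesis by (simp add: power2_eq_square mult_ac)
    qed
    have "(\<lambda>t. l1 D * l1 (mpow M t) ^ 2) \<longlonglongrightarrow> l1 D * 0 ^ 2"
      by (intro tendsto_intros stab_l1 assms(1))
    then have "cmod (D $ i $ j) \<le> 0"
      using b by (intro LIMSEQ_le_const[where X="\<lambda>t. l1 D * l1 (mpow M t) ^ 2"]) auto
    then show ?thesis by simp
  qed
  then show ?thesis by (simp add: vec_eq_iff)
qed

lemma lyap_unique: assumes "stab M" "mH M ** X ** M - X = - Q" "mH M ** Y ** M - Y = - Q"
  shows "X = Y"
proof -
  have x: "mH M ** X ** M = - Q + X" using assms(2) by (simp add: diff_eq_eq)
  have y: "mH M ** Y ** M = - Q + Y" using assms(3) by (simp add: diff_eq_eq)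
  have "mH M ** (X - Y) ** M = mH M ** X ** M - mH M ** Y ** M"
    by (simp add: matrix_diff_ldistrib matrix_diff_rdistrib)
  also have "\<dots> = X - Y" unfolding x y by simp
  finally have "mH M ** (X - Y) ** M = X - Y" .
  then have "X - Y = 0" by (rule fix0[OF assms(1)])
  then show ?thesis by simp
qed


lemma qf_cont: "continuous_on UNIV (\<lambda>y. qf P y)"
  unfolding qf_expand by (intro continuous_intros)

lemma V_cont: "continuous_on UNIV (\<lambda>y. Re (qf P y))"
  by (intro continuous_intros qf_cont)

lemma V_tendsto: "(f \<longlongrightarrow> y) F \<Longrightarrow> ((\<lambda>k. Re (qf P (f k))) \<longlongrightarrow> Re (qf P y)) F"
proof -
  assume "(f \<longlongrightarrow> y) F"
  moreover have "isCont (\<lambda>y. Re (qf P y)) y" using V_cont[of P] by (simp add: continuous_on_eq_continuous_at)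
  ultimately show ?thesis by (rule isCont_tendsto_compose[rotated])
qed

lemma V_scale: "Re (qf P (a *\<^sub>R x)) = a^2 * Re (qf P x)"
  by (simp add: qf_scale)

lemma coercive:
  fixes P :: "complex^'n^'n"
  assumes "posdef P"
  shows "\<exists>c>0. \<forall>y. c * norm y ^ 2 \<le> Re (qf P y)"
proof -
  have pos: "y \<noteq> 0 \<Longrightarrow> 0 < Re (qf P y)" for y
    using assms unfolding posdef_def qf_def hp_def by auto
  obtain e :: "complex^'n" where e: "norm e = 1" using vector_choose_size[of 1] by auto
  have "sphere (0::complex^'n) 1 \<noteq> {}" using e by auto
  then obtain y0 where y0: "y0 \<in> sphere 0 1" "\<forall>z\<in>sphere 0 1. Re (qf P y0) \<le> Re (qf P z)"
    using continuous_attains_inf[OF compact_sphere _ continuous_on_subset[OF V_cont]] by blast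
  have "y0 \<noteq> 0" using y0 by auto
  then have c0: "0 < Re (qf P y0)" by (rule pos)
  have "Re (qf P y0) * norm y ^ 2 \<le> Re (qf P y)" for y
  proof (cases "y = 0")
    case True then show ?thesis by (simp add: qf_def hp_def)
  next
    case False
    define z where "z = (1 / norm y) *\<^sub>R y"
    have zs: "z \<in> sphere 0 1" using False by (simp add: z_def)
    have yz: "y = norm y *\<^sub>R z" using False by (simp add: z_def)
    have e1: "Re (qf P y) = norm y ^ 2 * Re (qf P z)" by (subst yz) (rule V_scale)
    have "Re (qf P y0) \<le> Re (qf P z)" using y0 zs by blast
    then have "Re (qf P y0) * norm y ^ 2 \<le> Re (qf P z) * norm y ^ 2" by (rule mult_right_mono) simp
    then show ?thesis using e1 by (simp add: mult.commute)
  qed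
  then show ?thesis using c0 by blast
qed

lemma conv:
  fixes M :: "complex^'n^'n"
  assumes pd: "posdef P" and eq: "mH M ** P ** M - P = - (mH H ** H)" and obs: "observable M H"
  shows "stab M"
  unfolding stab_def
proof
  fix x :: "complex^'n"
  define V where "V y = Re (qf P y)" for y
  have eq': "mH M ** P ** M = P - mH H ** H" using eq by (simp add: diff_eq_eq)
  have Vstep: "V (M *v y) = V y - norm (H *v y) ^ 2" for y
  proof -
    have "qf P (M *v y) = qf (mH M ** P ** M) y" by (rule qf_conj[symmetric])
    also have "\<dots> = qf P y - of_real (norm (H *v y) ^ 2)" unfolding eq' qf_diff qf_gram ..
    finally show ?thesis by (simp add: V_def)
  qed
  obtain c where c: "c > 0" "\<And>y. c * norm y ^ 2 \<le> V y" using coercive[OF pd] V_def by auto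
  have V0: "0 \<le> V y" for y using c(2)[of y] c(1) by (meson mult_nonneg_nonneg order_trans zero_le_power2 less_imp_le)
  define y where "y t = mpow M t *v x" for t
  have ySuc: "y (Suc t) = M *v y t" for t by (simp add: y_def matrix_vector_mul_assoc)
  define v where "v t = V (y t)" for t
  have vSuc: "v (Suc t) = v t - norm (H *v y t) ^ 2" for t by (simp add: v_def ySuc Vstep)
  have "decseq v" unfolding decseq_Suc_iff vSuc by simp
  moreover have "\<forall>i. 0 \<le> v i" using V0 by (simp add: v_def)
  ultimately obtain L where L: "v \<longlonglongrightarrow> L" by (rule decseq_convergent)
  have vle: "v t \<le> v 0" for t using \<open>decseq v\<close> by (simp add: decseq_def)
  have "norm (y t) \<le> max 1 (v 0 / c)" for t
  proof (cases "norm (y t) \<le> 1")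
    case True then show ?thesis by simp
  next
    case False
    have "c * norm (y t) ^ 2 \<le> v 0" using c(2)[of "y t"] vle[of t] by (simp add: v_def)
    then have "norm (y t) ^ 2 \<le> v 0 / c" using c(1) by (simp add: field_simps)
    moreover have "norm (y t) * 1 \<le> norm (y t) * norm (y t)" using False by (intro mult_left_mono) auto
    then have "norm (y t) \<le> norm (y t) ^ 2" by (simp add: power2_eq_square)
    ultimately show ?thesis by simp
  qed
  then have "bounded (range y)" unfolding bounded_iff by blast
  then obtain z r where r: "strict_mono r" and yr: "(y \<circ> r) \<longlonglongrightarrow> z"
    using bounded_imp_convergent_subsequence by blast
  have Vj: "V (mpow M j *v z) = L" for j
  proof -
    have "(\<lambda>k. mpow M j *v (y \<circ> r) k) \<longlonglongrightarrow> mpow M j *v z"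
      by (rule bounded_linear.tendsto[OF matrix_vector_mul_bounded_linear yr])
    then have "(\<lambda>k. V (mpow M j *v (y \<circ> r) k)) \<longlonglongrightarrow> V (mpow M j *v z)"
      unfolding V_def by (rule V_tendsto)
    moreover have "(\<lambda>k. V (mpow M j *v (y \<circ> r) k)) = v \<circ> (\<lambda>k. j + r k)"
      by (auto simp: v_def y_def mpow_add matrix_vector_mul_assoc)
    moreover have "strict_mono (\<lambda>k. j + r k)" using r by (simp add: strict_mono_def)
    then have "(v \<circ> (\<lambda>k. j + r k)) \<longlonglongrightarrow> L" by (rule LIMSEQ_subseq_LIMSEQ[OF L])
    ultimately show ?thesis using LIMSEQ_unique by metis
  qed
  have "H *v (mpow M j *v z) = 0" for j
  proof -
    have "M *v (mpow M j *v z) = mpow M (Suc j) *v z" by (simp add: matrix_vector_mul_assoc)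
    then have "norm (H *v (mpow M j *v z)) ^ 2 = 0" using Vstep[of "mpow M j *v z"] Vj[of j] Vj[of "Suc j"] by simp
    then show ?thesis by simp
  qed
  then have "z = 0" using obs unfolding observable_def funpow_mv by blast
  then have "L = 0" using Vj[of 0] by (simp add: V_def qf_def hp_def)
  then have v0: "v \<longlonglongrightarrow> 0" using L by simp
  have "(\<lambda>t. sqrt (v t / c)) \<longlonglongrightarrow> sqrt (0 / c)"
    using c(1) by (intro tendsto_intros v0) auto
  then have g: "(\<lambda>t. sqrt (v t / c)) \<longlonglongrightarrow> 0" by simp
  have "norm (y t) \<le> sqrt (v t / c)" for t
  proof -
    have "norm (y t) ^ 2 \<le> v t / c" using c(2)[of "y t"] c(1) by (simp add: v_def field_simps)
    then show ?thesis using real_le_rsqrt by blast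
  qed
  then have "y \<longlonglongrightarrow> 0" by (intro Lim_null_comparison[OF _ g]) auto
  moreover have "y = (\<lambda>t. mpow M t *v x)" by (simp add: y_def fun_eq_iff)
  ultimately show "(\<lambda>t. mpow M t *v x) \<longlonglongrightarrow> 0" by simp
qed


lemma even_odd_lim:
  fixes X :: "nat \<Rightarrow> 'a::real_normed_vector"
  assumes ev: "(\<lambda>t. X (2*t)) \<longlonglongrightarrow> 0" and od: "(\<lambda>t. X (2*t+1)) \<longlonglongrightarrow> 0"
  shows "X \<longlonglongrightarrow> 0"
proof (rule LIMSEQ_I)
  fix e :: real assume "0 < e"
  obtain N1 where N1: "\<forall>n\<ge>N1. norm (X (2*n) - 0) < e" using LIMSEQ_D[OF ev \<open>0 < e\<close>] by auto
  obtain N2 where N2: "\<forall>n\<ge>N2. norm (X (2*n+1) - 0) < e" using LIMSEQ_D[OF od \<open>0 < e\<close>] by auto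
  show "\<exists>N. \<forall>n\<ge>N. norm (X n - 0) < e"
  proof (intro exI allI impI)
    fix n assume n: "2 * (N1 + N2) \<le> n"
    then have h: "N1 \<le> n div 2" "N2 \<le> n div 2" by auto
    consider "n = 2 * (n div 2)" | "n = 2 * (n div 2) + 1"
      using odd_two_times_div_two_succ[of n] even_two_times_div_two[of n] by (cases "even n") auto
    then show "norm (X n - 0) < e"
    proof cases
      case 1 then show ?thesis using N1 h by metis
    next
      case 2 then show ?thesis using N2 h by metis
    qed
  qed
qed

lemma antilin_twice: "antilin_map A (antilin_map A y) = (mconj A ** A) *v y"
  by (simp add: antilin_map_def vconj_mult matrix_vector_mul_assoc)

lemma antilin_even: "(antilin_map A ^^ (2*t)) y = mpow (mconj A ** A) t *v y"
proof (induction t)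
  case 0 then show ?case by simp
next
  case (Suc t)
  have "(antilin_map A ^^ (2 * Suc t)) y = antilin_map A (antilin_map A ((antilin_map A ^^ (2*t)) y))"
    by (simp add: numeral_2_eq_2)
  also have "\<dots> = mpow (mconj A ** A) (Suc t) *v y"
    by (simp add: Suc antilin_twice matrix_vector_mul_assoc)
  finally show ?case .
qed

lemma antilin_odd: "(antilin_map A ^^ (2*t+1)) y = mpow (mconj A ** A) t *v antilin_map A y"
  by (simp add: funpow_Suc_right[unfolded o_def] antilin_even del: funpow.simps)

lemma vconj_zero[simp]: "vconj 0 = 0"
  by (simp add: vconj_def vec_eq_iff)

lemma norm_vconj[simp]: "norm (vconj x) = norm x"
  by (simp add: norm_vec_def vconj_def)

lemma stab_AS: fixes A :: "complex^'n^'n" assumes "stab (mconj A ** A)" shows "asymptotically_stable (antilin_map A)"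
proof -
  let ?M = "mconj A ** A" and ?f = "antilin_map A"
  obtain K r where K: "0 \<le> K" "0 < r" "r < 1" "\<And>t. l1 (mpow ?M t) \<le> K * r ^ t"
    using stab_geom[OF assms] by blast
  have Kb: "norm (mpow ?M t *v y) \<le> K * norm y" for t y
  proof -
    have "norm (mpow ?M t *v y) \<le> l1 (mpow ?M t) * norm y" by (rule norm_mv_le)
    also have "\<dots> \<le> K * norm y"
    proof (rule mult_right_mono)
      have "r ^ t \<le> 1" using K by (simp add: power_le_one)
      then have "K * r ^ t \<le> K * 1" using K by (intro mult_left_mono) auto
      then show "l1 (mpow ?M t) \<le> K" using K(4)[of t] by simp
    qed simp
    finally show ?thesis .
  qed
  define C where "C = K * (1 + l1 (mconj A))"
  have C0: "0 \<le> C" using K l1_nonneg[of "mconj A"] by (simp add: C_def)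
  have fb: "norm (?f y) \<le> l1 (mconj A) * norm y" for y
    using norm_mv_le[of "mconj A" "vconj y"] by (simp add: antilin_map_def)
  have bound: "norm ((?f ^^ t) x) \<le> C * norm x" for t x
  proof -
    consider "t = 2 * (t div 2)" | "t = 2 * (t div 2) + 1"
      using odd_two_times_div_two_succ[of t] even_two_times_div_two[of t] by (cases "even t") auto
    then show ?thesis
    proof cases
      case 1
      then have "(?f ^^ t) x = mpow ?M (t div 2) *v x" by (metis antilin_even)
      then have "norm ((?f ^^ t) x) \<le> K * norm x" using Kb by simp
      also have "\<dots> \<le> C * norm x"
      proof (rule mult_right_mono)
        have "K * 1 \<le> K * (1 + l1 (mconj A))" using K(1) l1_nonneg[of "mconj A"] by (intro mult_left_mono) auto
        then show "K \<le> C" by (simp add: C_def)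
      qed simp
      finally show ?thesis .
    next
      case 2
      then have "(?f ^^ t) x = mpow ?M (t div 2) *v ?f x" by (metis antilin_odd)
      then have "norm ((?f ^^ t) x) \<le> K * norm (?f x)" using Kb by simp
      also have "\<dots> \<le> K * (l1 (mconj A) * norm x)" by (rule mult_left_mono[OF fb K(1)])
      also have "\<dots> \<le> C * norm x" unfolding C_def
        using K l1_nonneg[of "mconj A"] by (simp add: algebra_simps)
      finally show ?thesis .
    qed
  qed
  show ?thesis unfolding asymptotically_stable_def
  proof (intro conjI allI impI)
    fix e :: real assume e: "0 < e"
    show "\<exists>d>0. \<forall>x0. norm x0 < d \<longrightarrow> (\<forall>t. norm ((?f ^^ t) x0) < e)"
    proof (intro exI[of _ "e / (C + 1)"] conjI allI impI)
      show "0 < e / (C + 1)" using e C0 by simp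
      fix x0 :: "complex^'n" and t assume x0: "norm x0 < e / (C + 1)"
      have "norm ((?f ^^ t) x0) \<le> C * norm x0" by (rule bound)
      also have "\<dots> \<le> C * (e / (C + 1))" using x0 C0 by (intro mult_left_mono) auto
      also have "\<dots> < e" using C0 e by (simp add: field_simps)
      finally show "norm ((?f ^^ t) x0) < e" .
    qed
  next
    fix x0
    show "(\<lambda>t. (?f ^^ t) x0) \<longlonglongrightarrow> 0"
    proof (rule even_odd_lim)
      show "(\<lambda>t. (?f ^^ (2*t)) x0) \<longlonglongrightarrow> 0"
        using assms unfolding stab_def antilin_even by blast
      show "(\<lambda>t. (?f ^^ (2*t+1)) x0) \<longlonglongrightarrow> 0"
        using assms unfolding stab_def antilin_odd by blast
    qed
  qed
qed

lemma AS_stab: assumes "asymptotically_stable (antilin_map A)" shows "stab (mconj A ** A)"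
  unfolding stab_def
proof
  fix x
  have "(\<lambda>t. (antilin_map A ^^ t) x) \<longlonglongrightarrow> 0" using assms unfolding asymptotically_stable_def by blast
  moreover have "strict_mono (\<lambda>t::nat. 2 * t)" by (simp add: strict_mono_def)
  ultimately have "((\<lambda>t. (antilin_map A ^^ t) x) \<circ> (\<lambda>t. 2 * t)) \<longlonglongrightarrow> 0" by (rule LIMSEQ_subseq_LIMSEQ)
  then show "(\<lambda>t. mpow (mconj A ** A) t *v x) \<longlonglongrightarrow> 0" by (simp add: o_def antilin_even)
qed

definition rv :: "complex^'n \<Rightarrow> real^('n + 'n)" where
  "rv z = (\<chi> i. case i of Inl a \<Rightarrow> Re (z$a) | Inr a \<Rightarrow> Im (z$a))"

lemma rv_circ: "circ_rep 0 A *v rv z = rv (mconj A *v vconj z)"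
proof (subst vec_eq_iff, intro allI)
  fix i
  show "(circ_rep 0 A *v rv z) $ i = rv (mconj A *v vconj z) $ i"
    by (cases i) (simp_all add: circ_rep_def rv_def matrix_vector_mult_def sum_UNIV_Plus mconj_def vconj_def
        Re_sum Im_sum sum.distrib[symmetric] sum_negf[symmetric] sum_subtractf[symmetric] algebra_simps)
qed

lemma rv_zero: "rv z = 0 \<longleftrightarrow> z = 0"
proof
  assume "rv z = 0"
  then have "Re (z$a) = 0 \<and> Im (z$a) = 0" for a
  proof -
    have "rv z $ Inl a = 0" "rv z $ Inr a = 0" using \<open>rv z = 0\<close> by simp_all
    then show ?thesis by (simp add: rv_def)
  qed
  then show "z = 0" by (simp add: vec_eq_iff complex_eq_iff)
qed (simp add: rv_def vec_eq_iff split: sum.splits)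

lemma rv_funpow: "((\<lambda>v. circ_rep 0 A *v v) ^^ t) (rv z) = rv ((antilin_map A ^^ t) z)"
  by (induction t) (simp_all add: rv_circ antilin_map_def)

lemma obs_transfer:
  assumes "antilinear_observable A C"
  shows "observable (mconj A ** A) (vstack C (mconj C ** A))"
  unfolding observable_def funpow_mv
proof (intro allI impI)
  fix x assume h: "\<forall>t. vstack C (mconj C ** A) *v (mpow (mconj A ** A) t *v x) = 0"
  have "circ_rep 0 C *v ((\<lambda>v. circ_rep 0 A *v v) ^^ t) (rv x) = 0" for t
  proof -
    have "mconj C *v vconj ((antilin_map A ^^ t) x) = 0"
    proof -
      consider "t = 2 * (t div 2)" | "t = 2 * (t div 2) + 1"
      using odd_two_times_div_two_succ[of t] even_two_times_div_two[of t] by (cases "even t") auto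
      then show ?thesis
      proof cases
        case 1
        then have "(antilin_map A ^^ t) x = mpow (mconj A ** A) (t div 2) *v x" by (metis antilin_even)
        moreover have "C *v (mpow (mconj A ** A) (t div 2) *v x) = 0"
          using h vstack_mult by blast
        ultimately show ?thesis by (simp add: vconj_mult[symmetric])
      next
        case 2
        then have "(antilin_map A ^^ t) x = antilin_map A (mpow (mconj A ** A) (t div 2) *v x)"
          by (metis antilin_even funpow.simps(2) o_apply Suc_eq_plus1)
        moreover have "(mconj C ** A) *v (mpow (mconj A ** A) (t div 2) *v x) = 0"
          using h vstack_mult by blast
        moreover have "vconj (antilin_map A w) = A *v w" for w
          by (simp add: antilin_map_def vconj_mult)
        ultimately show ?thesis
          by (simp add: matrix_vector_mul_assoc matrix_mul_assoc)
      qed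
    qed
    then show ?thesis by (simp add: rv_funpow rv_circ rv_zero)
  qed
  then have "rv x = 0" using assms unfolding antilinear_observable_def observable_def by blast
  then show "x = 0" by (simp add: rv_zero)
qed


lemma E1_E2:
  assumes "mH A ** mconj P ** A - P = - (mH C ** C)"
  shows "mH (mconj A ** A) ** P ** (mconj A ** A) - P = - (mH (vstack C (mconj C ** A)) ** vstack C (mconj C ** A))"
proof -
  let ?Q = "mH C ** C"
  have t: "Tm A P = - ?Q + P" using assms unfolding Tm_def by (simp add: diff_eq_eq)
  have "Tm A (Tm A P) = Tm A P - Tm A ?Q" unfolding t Tm_add Tm_uminus by simp
  then have "Tm A (Tm A P) - P = - (?Q + Tm A ?Q)" unfolding t by simp
  then show ?thesis unfolding Tm_Tm vstack_gram Tm_CC .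
qed

lemma E2_E1:
  assumes st: "stab (mconj A ** A)"
    and e2: "mH (mconj A ** A) ** P ** (mconj A ** A) - P = - (mH (vstack C (mconj C ** A)) ** vstack C (mconj C ** A))"
  shows "mH A ** mconj P ** A - P = - (mH C ** C)"
proof -
  let ?Q = "mH C ** C"
  have e: "Tm A (Tm A P) - P = - (?Q + Tm A ?Q)" using e2 unfolding Tm_Tm vstack_gram Tm_CC .
  then have tt: "Tm A (Tm A P) = - (?Q + Tm A ?Q) + P" by (simp add: diff_eq_eq)
  define R where "R = Tm A P - P + ?Q"
  have "Tm A R = Tm A (Tm A P) - Tm A P + Tm A ?Q" unfolding R_def Tm_add Tm_diff ..
  also have "\<dots> = - R" unfolding tt R_def by (simp add: algebra_simps)
  finally have "Tm A (Tm A R) = R" by (simp add: Tm_uminus)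
  then have "mH (mconj A ** A) ** R ** (mconj A ** A) = R" unfolding Tm_Tm .
  then have "R = 0" by (rule fix0[OF st])
  then show ?thesis unfolding R_def Tm_def by (simp add: algebra_simps eq_neg_iff_add_eq_0)
qed

theorem corollary5:
  fixes A2 :: "complex^'n^'n" and C2 :: "complex^'n^'p" and CN :: "complex^'n^'q"
  assumes obs2: "antilinear_observable A2 C2"
    and obsN: "observable (mconj A2 ** A2) CN"
  shows "(asymptotically_stable (antilin_map A2) \<longleftrightarrow>
           (\<exists>!P1. posdef P1 \<and> mH A2 ** mconj P1 ** A2 - P1 = - (mH C2 ** C2))) \<and>
         ((\<exists>!P1. posdef P1 \<and> mH A2 ** mconj P1 ** A2 - P1 = - (mH C2 ** C2)) \<longleftrightarrow>
           (\<exists>!PN. posdef PN \<and>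
              mH (mconj A2 ** A2) ** PN ** (mconj A2 ** A2) - PN = - (mH CN ** CN))) \<and>
         (asymptotically_stable (antilin_map A2) \<longrightarrow>
           (\<forall>P1. (mH A2 ** mconj P1 ** A2 - P1 = - (mH C2 ** C2)) \<longleftrightarrow>
              (let C = vstack C2 (mconj C2 ** A2) in
                 mH (mconj A2 ** A2) ** P1 ** (mconj A2 ** A2) - P1 = - (mH C ** C))))"
proof -
  let ?M = "mconj A2 ** A2" and ?Cs = "vstack C2 (mconj C2 ** A2)"
  have AS: "asymptotically_stable (antilin_map A2) \<longleftrightarrow> stab ?M"
    using AS_stab stab_AS by blast
  have obsS: "observable ?M ?Cs" by (rule obs_transfer[OF obs2])
  have S_E1: "\<exists>!P1. posdef P1 \<and> mH A2 ** mconj P1 ** A2 - P1 = - (mH C2 ** C2)" if st: "stab ?M"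
  proof
    let ?P = "lyap ?M (mH ?Cs ** ?Cs)"
    show "posdef ?P \<and> mH A2 ** mconj ?P ** A2 - ?P = - (mH C2 ** C2)"
      using lyap_posdef[OF st obsS] E2_E1[OF st lyap_eq[OF st]] by blast
    fix P' assume "posdef P' \<and> mH A2 ** mconj P' ** A2 - P' = - (mH C2 ** C2)"
    then have "mH ?M ** P' ** ?M - P' = - (mH ?Cs ** ?Cs)" using E1_E2 by blast
    then show "P' = ?P" using lyap_unique[OF st _ lyap_eq[OF st]] by blast
  qed
  have E1_S: "stab ?M" if "\<exists>P1. posdef P1 \<and> mH A2 ** mconj P1 ** A2 - P1 = - (mH C2 ** C2)"
    using that E1_E2 conv obsS by blast
  have S_E2: "\<exists>!PN. posdef PN \<and> mH ?M ** PN ** ?M - PN = - (mH CN ** CN)" if st: "stab ?M"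
  proof
    let ?P = "lyap ?M (mH CN ** CN)"
    show "posdef ?P \<and> mH ?M ** ?P ** ?M - ?P = - (mH CN ** CN)"
      using lyap_posdef[OF st obsN] lyap_eq[OF st] by blast
    fix P' assume "posdef P' \<and> mH ?M ** P' ** ?M - P' = - (mH CN ** CN)"
    then show "P' = ?P" using lyap_unique[OF st _ lyap_eq[OF st]] by blast
  qed
  have E2_S: "stab ?M" if "\<exists>PN. posdef PN \<and> mH ?M ** PN ** ?M - PN = - (mH CN ** CN)"
    using that conv obsN by blast
  have part3: "(mH A2 ** mconj P1 ** A2 - P1 = - (mH C2 ** C2)) \<longleftrightarrow>
              (let C = ?Cs in mH ?M ** P1 ** ?M - P1 = - (mH C ** C))" if st: "stab ?M" for P1
    unfolding Let_def using E1_E2 E2_E1[OF st] by blast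
  show ?thesis
  proof (intro conjI)
    show "asymptotically_stable (antilin_map A2) \<longleftrightarrow>
           (\<exists>!P1. posdef P1 \<and> mH A2 ** mconj P1 ** A2 - P1 = - (mH C2 ** C2))"
      using AS S_E1 E1_S by blast
    show "(\<exists>!P1. posdef P1 \<and> mH A2 ** mconj P1 ** A2 - P1 = - (mH C2 ** C2)) \<longleftrightarrow>
           (\<exists>!PN. posdef PN \<and> mH ?M ** PN ** ?M - PN = - (mH CN ** CN))"
      using S_E1 E1_S S_E2 E2_S by blast
    show "asymptotically_stable (antilin_map A2) \<longrightarrow>
           (\<forall>P1. (mH A2 ** mconj P1 ** A2 - P1 = - (mH C2 ** C2)) \<longleftrightarrow>
              (let C = ?Cs in mH ?M ** P1 ** ?M - P1 = - (mH C ** C)))"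
      using AS part3 by blast
  qed
qed

end
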